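(* Let $X$ be a proper metric space, $Y$ a metric space, and $F\colon X\to Y$ an $L$-Lipschitz quotient mapping. Let $\gamma\colon[0,T]\to Y$ be a $1$-Lipschitz curve with $\gamma(0)=F(x)$ for some $x\in X$. Then there is an $L$-Lipschitz curve $\tilde\gamma\colon[0,T]\to X$ with $\tilde\gamma(0)=x$ and $F\circ\tilde\gamma=\gamma$.
   Context: A metric space is proper if closed balls are compact. $F\colon X\to Y$ is an $L$-Lipschitz quotient ($L$-LQ) mapping, $L\ge1$, if $B(F(x),r/L)\subseteq F(B(x,r))\subseteq B(F(x),Lr)$ for all $x\in X$, $r>0$, where $B$ denotes open balls. *)

theory Defs
  imports "HOL-Analysis.Analysis"
begin

definition proper_metric_space :: "'a::metric_space itself \<Rightarrow> bool" where
  "proper_metric_space _ \<longleftrightarrow> (\<forall>(x::'a) r. compact (cball x r))"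

definition lipschitz_quotient ::
  "real \<Rightarrow> ('a::metric_space \<Rightarrow> 'b::metric_space) \<Rightarrow> bool" where
  "lipschitz_quotient L F \<longleftrightarrow> L \<ge> 1 \<and>
     (\<forall>x r. r > 0 \<longrightarrow> ball (F x) (r / L) \<subseteq> F ` ball x r \<and> F ` ball x r \<subseteq> ball (F x) (L * r))"

end

theory Submission
  imports Defs "HOL-Complex_Analysis.Great_Picard"
begin

lemma lq_F_lip:
  assumes "lipschitz_quotient L F"
  shows "dist (F y) (F z) \<le> L * dist y z"
proof (rule field_le_epsilon)
  fix \<epsilon> :: real assume "0 < \<epsilon>"
  have L1: "L \<ge> 1" using assms by (simp add: lipschitz_quotient_def)
  define r where "r = dist y z + \<epsilon> / L"
  have r0: "r > 0" using \<open>0 < \<epsilon>\<close> L1 by (simp add: r_def add_nonneg_pos)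
  have "y \<in> ball z r" using \<open>0 < \<epsilon>\<close> L1 by (simp add: r_def dist_commute)
  hence "F y \<in> ball (F z) (L * r)" using assms r0 unfolding lipschitz_quotient_def by blast
  hence "dist (F y) (F z) < L * r" by (simp add: dist_commute)
  also have "L * r = L * dist y z + \<epsilon>" using L1 by (simp add: r_def algebra_simps)
  finally show "dist (F y) (F z) \<le> L * dist y z + \<epsilon>" by simp
qed

lemma lq_lift:
  assumes "lipschitz_quotient L F" "dist (F p) w < a" "a > 0"
  shows "\<exists>y. F y = w \<and> dist p y < L * a"
proof -
  have L1: "L \<ge> 1" using assms by (simp add: lipschitz_quotient_def)
  have r0: "L * a > 0" using L1 assms by simp
  have "w \<in> ball (F p) ((L * a) / L)" using assms L1 by simp
  hence "w \<in> F ` ball p (L * a)" using assms(1) r0 unfolding lipschitz_quotient_def by blast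
  thus ?thesis by auto
qed

lemma grid_lift:
  fixes F :: "'a::metric_space \<Rightarrow> 'b::metric_space"
  assumes lq: "lipschitz_quotient L F" and lip: "1-lipschitz_on {0..T} \<gamma>"
    and g0: "\<gamma> 0 = F x" and T0: "T \<ge> 0" and N0: "N > 0" and d0: "\<delta> > 0"
  shows "\<exists>p. p 0 = x \<and> (\<forall>k\<le>N. F (p k) = \<gamma> (real k * (T / real N))) \<and>
             (\<forall>k<N. dist (p k) (p (Suc k)) \<le> L * (T / real N + \<delta>))"
proof -
  have step: "\<exists>y. (F q = \<gamma> (real k * (T / real N)) \<and> k < N) \<longrightarrow>
       (F y = \<gamma> (real (Suc k) * (T / real N)) \<and> dist q y < L * (T / real N + \<delta>))" for q k
  proof (cases "F q = \<gamma> (real k * (T / real N)) \<and> k < N")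
    case True
    have h0: "T / real N \<ge> 0" using T0 by simp
    have a: "real k * (T / real N) \<in> {0..T}" "real (Suc k) * (T / real N) \<in> {0..T}"
    proof -
      have "real (Suc k) * (T / real N) \<le> real N * (T / real N)"
        using True h0 by (intro mult_right_mono) auto
      also have "\<dots> = T" using N0 by simp
      finally have "real (Suc k) * (T / real N) \<le> T" .
      moreover have "real k * (T / real N) \<le> real (Suc k) * (T / real N)"
        using h0 by (intro mult_right_mono) auto
      ultimately show "real k * (T / real N) \<in> {0..T}" "real (Suc k) * (T / real N) \<in> {0..T}"
        using h0 by (simp_all del: of_nat_Suc mult_Suc times_divide_eq_right)
    qed
    have "dist (F q) (\<gamma> (real (Suc k) * (T / real N))) \<le> 1 * dist (real k * (T / real N)) (real (Suc k) * (T / real N))"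
      using True lipschitz_onD[OF lip a] by simp
    also have "\<dots> = T / real N" using h0 N0 T0 by (simp add: dist_real_def diff_divide_distrib[symmetric] algebra_simps)
    also have "\<dots> < T / real N + \<delta>" using d0 by simp
    finally obtain y where "F y = \<gamma> (real (Suc k) * (T / real N)) \<and> dist q y < L * (T / real N + \<delta>)"
      using lq_lift[OF lq] h0 d0 by (metis add_nonneg_pos)
    then show ?thesis by blast
  qed auto
  then obtain nx where nx: "\<And>q k. (F q = \<gamma> (real k * (T / real N)) \<and> k < N) \<Longrightarrow>
       (F (nx q k) = \<gamma> (real (Suc k) * (T / real N)) \<and> dist q (nx q k) < L * (T / real N + \<delta>))"
    by metis
  define p where "p = rec_nat x (\<lambda>k q. nx q k)"
  have p0: "p 0 = x" and pS: "\<And>k. p (Suc k) = nx (p k) k" by (simp_all add: p_def)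
  have I: "k \<le> N \<Longrightarrow> F (p k) = \<gamma> (real k * (T / real N))" for k
  proof (induction k)
    case 0 then show ?case using p0 g0 by simp
  next
    case (Suc k) then show ?case using nx[of "p k" k] pS by simp
  qed
  have "\<forall>k<N. dist (p k) (p (Suc k)) \<le> L * (T / real N + \<delta>)"
    using I nx pS by (metis less_eq_real_def less_imp_le_nat)
  with p0 I show ?thesis by blast
qed

lemma chain_dist_le:
  fixes p :: "nat \<Rightarrow> 'a::metric_space"
  assumes "\<forall>k<N. dist (p k) (p (Suc k)) \<le> D" "j \<le> k" "k \<le> N"
  shows "dist (p j) (p k) \<le> real (k - j) * D"
  using assms(2,3)
proof (induction k)
  case 0 then show ?case by simp
next
  case (Suc k)
  show ?case
  proof (cases "j = Suc k")
    case True then show ?thesis by simp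
  next
    case False
    then have jk: "j \<le> k" using Suc by simp
    have "dist (p j) (p (Suc k)) \<le> dist (p j) (p k) + dist (p k) (p (Suc k))"
      by (rule dist_triangle)
    also have "\<dots> \<le> real (k - j) * D + D" using Suc jk assms(1) by (intro add_mono) auto
    also have "\<dots> = real (Suc k - j) * D" using jk by (simp add: Suc_diff_le algebra_simps)
    finally show ?thesis .
  qed
qed

lemma chain_dist_abs:
  fixes p :: "nat \<Rightarrow> 'a::metric_space"
  assumes "\<forall>k<N. dist (p k) (p (Suc k)) \<le> D" "j \<le> N" "k \<le> N"
  shows "dist (p j) (p k) \<le> \<bar>real j - real k\<bar> * D"
proof (cases "j \<le> k")
  case True
  then show ?thesis using chain_dist_le[OF assms(1) True assms(3)] by (simp add: of_nat_diff)
next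
  case False
  then have kj: "k \<le> j" by simp
  then show ?thesis using chain_dist_le[OF assms(1) kj assms(2)]
    by (simp add: of_nat_diff dist_commute)
qed

lemma idx_prop:
  fixes N :: nat and u T :: real
  assumes "N > 0" "0 \<le> u" "u \<le> T"
  defines "k \<equiv> min N (nat \<lfloor>u / (T / real N)\<rfloor>)"
  shows "k \<le> N" "\<bar>u - real k * (T / real N)\<bar> \<le> T / real N"
proof -
  show "k \<le> N" by (simp add: k_def)
  show "\<bar>u - real k * (T / real N)\<bar> \<le> T / real N"
  proof (cases "T = 0")
    case True then show ?thesis using assms by simp
  next
    case False
    then have h: "T / real N > 0" using assms by simp
    define f where "f = \<lfloor>u / (T / real N)\<rfloor>"
    have f0: "f \<ge> 0" using assms h by (simp add: f_def)
    have f1: "real_of_int f * (T / real N) \<le> u"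
      using h f_def by (metis floor_divide_lower)
    have f2: "u < (real_of_int f + 1) * (T / real N)"
      using h f_def by (metis floor_divide_upper)
    have "f \<le> int N"
    proof (rule ccontr)
      assume "\<not> f \<le> int N"
      then have "real_of_int f \<ge> real N + 1" by linarith
      then have "real_of_int f * (T / real N) \<ge> (real N + 1) * (T / real N)"
        using h by (intro mult_right_mono) auto
      also have "(real N + 1) * (T / real N) = T + T / real N" using assms by (simp add: field_simps)
      finally show False using f1 h assms by linarith
    qed
    then have "k = nat f" using f0 unfolding k_def f_def[symmetric] by simp
    then have kf: "real k = real_of_int f" using f0 by simp
    have "(real_of_int f + 1) * (T / real N) = real_of_int f * (T / real N) + T / real N"
      by (simp only: distrib_right mult_1)
    then show ?thesis using f1 f2 kf by (simp only: abs_le_iff) linarith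
  qed
qed

lemma convergent_subseq_compact:
  fixes f :: "nat \<Rightarrow> 'b \<Rightarrow> 'a::metric_space"
  assumes "countable S" "compact K" and M: "\<And>n x. x \<in> S \<Longrightarrow> f n x \<in> K"
  obtains k where "strict_mono (k::nat\<Rightarrow>nat)" "\<And>x. x \<in> S \<Longrightarrow> \<exists>l. (\<lambda>n. f (k n) x) \<longlonglongrightarrow> l"
proof (cases "S = {}")
  case True
  then show ?thesis
    using strict_mono_id that by fastforce
next
  case False
  with \<open>countable S\<close> obtain \<sigma> :: "nat \<Rightarrow> 'b" where \<sigma>: "S = range \<sigma>"
    using uncountable_def by blast
  obtain k where "strict_mono k" and k: "\<And>i. \<exists>l. (\<lambda>n. (f \<circ> k) n (\<sigma> i)) \<longlonglongrightarrow> l"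
  proof (rule subsequence_diagonalization_lemma
      [of "\<lambda>i r. \<exists>l. ((\<lambda>n. (f \<circ> r) n (\<sigma> i)) \<longlongrightarrow> l) sequentially" id])
    show "\<exists>k::nat\<Rightarrow>nat. strict_mono k \<and> (\<exists>l. (\<lambda>n. (f \<circ> (r \<circ> k)) n (\<sigma> i)) \<longlonglongrightarrow> l)" for i r
    proof -
      have "f (r n) (\<sigma> i) \<in> K" for n
        by (simp add: \<sigma> M)
      then show ?thesis
        using compact_def [of K] \<open>compact K\<close> by (force simp: o_def)
    qed
    show "\<exists>l. (\<lambda>n. (f \<circ> (r \<circ> k2)) n (\<sigma> i)) \<longlonglongrightarrow> l" 
      if "\<exists>l. (\<lambda>n. (f \<circ> (r \<circ> k1)) n (\<sigma> i)) \<longlonglongrightarrow> l" "\<And>j. N \<le> j \<Longrightarrow> \<exists>j'\<ge>j. k2 j = k1 j'"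
      for i N and r k1 k2 :: "nat\<Rightarrow>nat"
      using that
      by (simp add: lim_sequentially) (metis (no_types, opaque_lifting) le_cases order_trans)
  qed auto
  with \<sigma> that show ?thesis
    by force
qed

theorem lemma3p3:
  fixes F :: "'a::metric_space \<Rightarrow> 'b::metric_space"
    and \<gamma> :: "real \<Rightarrow> 'b" and T L :: real and x :: 'a
  assumes "proper_metric_space TYPE('a)"
    and "lipschitz_quotient L F"
    and "1-lipschitz_on {0..T} \<gamma>"
    and "\<gamma> 0 = F x"
  shows "\<exists>g :: real \<Rightarrow> 'a. L-lipschitz_on {0..T} g \<and> g 0 = x \<and>
           (\<forall>t\<in>{0..T}. F (g t) = \<gamma> t)"
proof -
  have L1: "L \<ge> 1" using assms(2) by (simp add: lipschitz_quotient_def)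
  show ?thesis
  proof (cases "T < 0")
    case True
    then show ?thesis using L1 by (intro exI[of _ "\<lambda>_. x"]) (auto simp: lipschitz_on_def)
  next
    case False
    then have T0: "T \<ge> 0" by simp
    define h where "h n = T / real (Suc n)" for n
    define \<delta> where "\<delta> n = 1 / (real (Suc n))^2" for n
    define e where "e n = 2 * h n + 1 / real (Suc n)" for n
    define c where "c t = max 0 (min T t)" for t
    have h0: "h n \<ge> 0" for n using T0 by (simp add: h_def)
    have c_in: "0 \<le> c t" "c t \<le> T" for t using T0 by (auto simp: c_def)
    have c_lip: "\<bar>c s - c t\<bar> \<le> \<bar>s - t\<bar>" for s t unfolding c_def by (auto simp: abs_if max_def min_def)
    have c_id: "t \<in> {0..T} \<Longrightarrow> c t = t" for t by (simp add: c_def)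
    have "\<forall>n. \<exists>p. p 0 = x \<and> (\<forall>k\<le>Suc n. F (p k) = \<gamma> (real k * h n)) \<and>
             (\<forall>k<Suc n. dist (p k) (p (Suc k)) \<le> L * (h n + \<delta> n))"
    proof
      fix n
      show "\<exists>p. p 0 = x \<and> (\<forall>k\<le>Suc n. F (p k) = \<gamma> (real k * h n)) \<and>
             (\<forall>k<Suc n. dist (p k) (p (Suc k)) \<le> L * (h n + \<delta> n))"
        unfolding h_def using grid_lift[OF assms(2,3,4) T0, of "Suc n" "\<delta> n"] by (simp add: \<delta>_def)
    qed
    then obtain P where P0: "\<And>n. P n 0 = x"
      and PF: "\<And>n k. k \<le> Suc n \<Longrightarrow> F (P n k) = \<gamma> (real k * h n)"
      and Pd: "\<And>n. \<forall>k<Suc n. dist (P n k) (P n (Suc k)) \<le> L * (h n + \<delta> n)"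
      by metis
    define idx where "idx n t = min (Suc n) (nat \<lfloor>c t / h n\<rfloor>)" for n t
    have idx1: "idx n t \<le> Suc n" and idx2: "\<bar>c t - real (idx n t) * h n\<bar> \<le> h n" for n t
      using idx_prop[of "Suc n" "c t" T] c_in[of t] unfolding idx_def h_def by auto
    define G where "G n t = P n (idx n t)" for n t
    have G0: "G n 0 = x" for n using T0 by (simp add: G_def idx_def c_def P0)
    have Gerr: "dist (F (G n t)) (\<gamma> (c t)) \<le> h n" for n t
    proof -
      have "real (idx n t) * h n \<le> real (Suc n) * h n" using idx1[where n=n and t=t] h0[of n] by (intro mult_right_mono) (simp_all only: of_nat_le_iff)
      also have "\<dots> = T" by (simp add: h_def)
      finally have "real (idx n t) * h n \<in> {0..T}" using h0 by simp
      moreover have "c t \<in> {0..T}" using c_in by simp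
      ultimately have "dist (\<gamma> (real (idx n t) * h n)) (\<gamma> (c t)) \<le> 1 * dist (real (idx n t) * h n) (c t)"
        using lipschitz_onD[OF assms(3)] by blast
      also have "\<dots> \<le> h n" using idx2[where n=n and t=t] by (simp add: dist_real_def abs_minus_commute)
      finally show ?thesis using PF[OF idx1] by (simp add: G_def)
    qed
    have Gdist: "dist (G n s) (G n t) \<le> L * (\<bar>c s - c t\<bar> + e n)" for n s t
    proof -
      define a where "a = idx n s"
      define b where "b = idx n t"
      have "dist (G n s) (G n t) \<le> \<bar>real a - real b\<bar> * (L * (h n + \<delta> n))"
        unfolding G_def a_def b_def by (rule chain_dist_abs[OF Pd idx1 idx1])
      also have "\<dots> = L * (\<bar>real a - real b\<bar> * h n + \<bar>real a - real b\<bar> * \<delta> n)"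
        by (simp add: algebra_simps)
      also have "\<dots> \<le> L * (\<bar>c s - c t\<bar> + e n)"
      proof (rule mult_left_mono)
        have "\<bar>real a - real b\<bar> * h n = \<bar>real a * h n - real b * h n\<bar>"
          using h0[of n] by (simp add: abs_mult left_diff_distrib[symmetric])
        also have "\<dots> \<le> \<bar>c s - c t\<bar> + 2 * h n"
          using idx2[where n=n and t=s] idx2[where n=n and t=t] unfolding a_def b_def by linarith
        finally have A: "\<bar>real a - real b\<bar> * h n \<le> \<bar>c s - c t\<bar> + 2 * h n" .
        have "\<bar>real a - real b\<bar> \<le> real (Suc n)"
          using idx1[where n=n and t=s] idx1[where n=n and t=t] unfolding a_def b_def by linarith
        then have "\<bar>real a - real b\<bar> * \<delta> n \<le> real (Suc n) * \<delta> n"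
          by (intro mult_right_mono) (auto simp: \<delta>_def)
        also have "real (Suc n) * \<delta> n = 1 / real (Suc n)"
          by (simp add: \<delta>_def power2_eq_square)
        finally have B: "\<bar>real a - real b\<bar> * \<delta> n \<le> 1 / real (Suc n)" .
        show "\<bar>real a - real b\<bar> * h n + \<bar>real a - real b\<bar> * \<delta> n \<le> \<bar>c s - c t\<bar> + e n"
          using A B by (simp add: e_def)
      qed (use L1 in simp)
      finally show ?thesis .
    qed
    have K: "compact (cball x (L * (3 * T + 1)))"
      using assms(1) by (simp add: proper_metric_space_def)
    have hle: "h n \<le> T" for n using T0 by (simp add: h_def divide_le_eq mult_le_cancel_left1)
    have e0: "e n \<ge> 0" for n using h0[of n] by (simp add: e_def)
    have ele: "e n \<le> 2 * T + 1" for n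
    proof -
      have "1 / real (Suc n) \<le> 1" by simp
      then show ?thesis using hle[of n] unfolding e_def by linarith
    qed
    have GK: "G n t \<in> cball x (L * (3 * T + 1))" for n t
    proof -
      have "dist x (G n t) \<le> L * (\<bar>c 0 - c t\<bar> + e n)" using Gdist[of n 0 t] G0 by simp
      also have "\<dots> \<le> L * (3 * T + 1)"
        using c_in[of t] ele[of n] L1 T0 by (intro mult_left_mono) (auto simp: c_def)
      finally show ?thesis by simp
    qed
    obtain r where r: "strict_mono r" and rq: "\<And>q. q \<in> \<rat> \<Longrightarrow> \<exists>l. (\<lambda>n. G (r n) q) \<longlonglongrightarrow> l"
      using convergent_subseq_compact[OF countable_rat K, of G] GK by blast
    have hlim: "h \<longlonglongrightarrow> 0"
      unfolding h_def using LIMSEQ_Suc[OF lim_const_over_n[of T]] by simp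
    have elim: "e \<longlonglongrightarrow> 0"
    proof -
      have "(\<lambda>n. 2 * h n + 1 / real (Suc n)) \<longlonglongrightarrow> 2 * 0 + 0"
        by (intro tendsto_add tendsto_mult hlim tendsto_const LIMSEQ_Suc[OF lim_const_over_n[of 1]])
      then show ?thesis by (simp add: e_def[abs_def])
    qed
    have erlim: "(\<lambda>n. e (r n)) \<longlonglongrightarrow> 0"
      using LIMSEQ_subseq_LIMSEQ[OF elim r] by (simp add: o_def)
    have hrlim: "(\<lambda>n. h (r n)) \<longlonglongrightarrow> 0"
      using LIMSEQ_subseq_LIMSEQ[OF hlim r] by (simp add: o_def)
    have conv: "\<exists>l. (\<lambda>n. G (r n) t) \<longlonglongrightarrow> l" for t
    proof -
      have "Cauchy (\<lambda>n. G (r n) t)"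
      proof (rule metric_CauchyI)
        fix \<epsilon> :: real assume \<epsilon>: "\<epsilon> > 0"
        have L0: "L > 0" using L1 by simp
        obtain q where q: "q \<in> \<rat>" "t < q" "q < t + \<epsilon> / (8 * L)"
          using Rats_dense_in_real[of t "t + \<epsilon> / (8 * L)"] \<epsilon> L0 by auto
        have tq: "\<bar>c t - c q\<bar> < \<epsilon> / (8 * L)" using c_lip[of t q] q by simp
        obtain l where l: "(\<lambda>n. G (r n) q) \<longlonglongrightarrow> l" using rq[OF q(1)] by blast
        then have "Cauchy (\<lambda>n. G (r n) q)" by (rule LIMSEQ_imp_Cauchy)
        then obtain M1 where M1: "\<forall>m\<ge>M1. \<forall>n\<ge>M1. dist (G (r m) q) (G (r n) q) < \<epsilon> / 4"
        proof -
          have "\<epsilon> / 4 > 0" using \<epsilon> by simp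
          with \<open>Cauchy (\<lambda>n. G (r n) q)\<close> show ?thesis unfolding Cauchy_def using that by blast
        qed
        obtain M2 where M2: "\<forall>n\<ge>M2. \<bar>e (r n) - 0\<bar> < \<epsilon> / (8 * L)"
        proof -
          have "\<epsilon> / (8 * L) > 0" using \<epsilon> L0 by simp
          from LIMSEQ_D[OF erlim this] show ?thesis using that by (auto simp: real_norm_def)
        qed
        show "\<exists>M. \<forall>m\<ge>M. \<forall>n\<ge>M. dist (G (r m) t) (G (r n) t) < \<epsilon>"
        proof (intro exI[of _ "max M1 M2"] allI impI)
          fix m n assume mn: "max M1 M2 \<le> m" "max M1 M2 \<le> n"
          have b1: "dist (G (r m) t) (G (r m) q) \<le> \<epsilon> / 4"
          proof -
            have "dist (G (r m) t) (G (r m) q) \<le> L * (\<bar>c t - c q\<bar> + e (r m))" by (rule Gdist)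
            also have "\<dots> \<le> L * (\<epsilon> / (8 * L) + \<epsilon> / (8 * L))"
              using tq M2 mn e0[of "r m"] L0 by (intro mult_left_mono) auto
            also have "\<dots> = \<epsilon> / 4" using L0 by (simp add: field_simps)
            finally show ?thesis .
          qed
          have b2: "dist (G (r n) q) (G (r n) t) \<le> \<epsilon> / 4"
          proof -
            have "dist (G (r n) q) (G (r n) t) \<le> L * (\<bar>c q - c t\<bar> + e (r n))" by (rule Gdist)
            also have "\<dots> \<le> L * (\<epsilon> / (8 * L) + \<epsilon> / (8 * L))"
              using tq M2 mn e0[of "r n"] L0 by (intro mult_left_mono) (auto simp: abs_minus_commute)
            also have "\<dots> = \<epsilon> / 4" using L0 by (simp add: field_simps)
            finally show ?thesis .
          qed
          have b3: "dist (G (r m) q) (G (r n) q) < \<epsilon> / 4" using M1 mn by auto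
          have "dist (G (r m) t) (G (r n) t) \<le> dist (G (r m) t) (G (r m) q) + dist (G (r m) q) (G (r n) t)"
            by (rule dist_triangle)
          also have "\<dots> \<le> dist (G (r m) t) (G (r m) q) + (dist (G (r m) q) (G (r n) q) + dist (G (r n) q) (G (r n) t))"
            by (simp add: dist_triangle)
          finally show "dist (G (r m) t) (G (r n) t) < \<epsilon>" using b1 b2 b3 \<epsilon> by linarith
        qed
      qed
      moreover have "\<forall>n. G (r n) t \<in> cball x (L * (3 * T + 1))" using GK by blast
      moreover have "\<forall>f. (\<forall>n. f n \<in> cball x (L * (3 * T + 1))) \<and> Cauchy f \<longrightarrow>
          (\<exists>l\<in>cball x (L * (3 * T + 1)). f \<longlonglongrightarrow> l)"
        using compact_imp_complete[OF K] unfolding complete_def .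
      ultimately have "\<exists>l\<in>cball x (L * (3 * T + 1)). (\<lambda>n. G (r n) t) \<longlonglongrightarrow> l"
        by (metis (no_types, lifting))
      then show ?thesis by blast
    qed
    then obtain g where g: "\<And>t. (\<lambda>n. G (r n) t) \<longlonglongrightarrow> g t" by metis
    have glip: "dist (g s) (g t) \<le> L * dist s t" for s t
    proof -
      have "dist (g s) (g t) \<le> L * (\<bar>c s - c t\<bar> + 0)"
      proof (rule LIMSEQ_le[OF tendsto_dist[OF g g]])
        show "(\<lambda>n. L * (\<bar>c s - c t\<bar> + e (r n))) \<longlonglongrightarrow> L * (\<bar>c s - c t\<bar> + 0)"
          by (intro tendsto_intros erlim)
        show "\<exists>N. \<forall>n\<ge>N. dist (G (r n) s) (G (r n) t) \<le> L * (\<bar>c s - c t\<bar> + e (r n))"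
          using Gdist by blast
      qed
      also have "\<dots> \<le> L * dist s t" using c_lip[of s t] L1 by (simp add: dist_real_def)
      finally show ?thesis .
    qed
    have gx: "g 0 = x"
      using LIMSEQ_unique[OF g[of 0]] G0 by simp
    have Fcont: "isCont F y" for y
    proof -
      have "L-lipschitz_on UNIV F" using lq_F_lip[OF assms(2)] L1 by (auto simp: lipschitz_on_def)
      then have "continuous_on UNIV F" by (rule lipschitz_on_continuous_on)
      then show ?thesis by (simp add: continuous_on_eq_continuous_at)
    qed
    have gF: "F (g t) = \<gamma> t" if t: "t \<in> {0..T}" for t
    proof -
      have A: "(\<lambda>n. F (G (r n) t)) \<longlonglongrightarrow> F (g t)" by (rule isCont_tendsto_compose[OF Fcont g])
      have "(\<lambda>n. dist (F (G (r n) t)) (\<gamma> t)) \<longlonglongrightarrow> 0"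
      proof (rule tendsto_sandwich[OF _ _ tendsto_const hrlim])
        show "\<forall>\<^sub>F n in sequentially. 0 \<le> dist (F (G (r n) t)) (\<gamma> t)" by simp
        show "\<forall>\<^sub>F n in sequentially. dist (F (G (r n) t)) (\<gamma> t) \<le> h (r n)"
        proof (rule always_eventually, rule allI)
          fix n show "dist (F (G (r n) t)) (\<gamma> t) \<le> h (r n)"
            using Gerr[where n="r n" and t=t] c_id[OF t] by simp
        qed
      qed
      then have B: "(\<lambda>n. F (G (r n) t)) \<longlonglongrightarrow> \<gamma> t" by (rule iffD2[OF tendsto_dist_iff])
      show ?thesis using LIMSEQ_unique[OF A B] .
    qed
    show ?thesis
      using glip gx gF L1 by (intro exI[of _ g]) (auto simp: lipschitz_on_def)
  qed
qed

end
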